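(* Let $\alpha>0$, $\beta_m>\alpha$, $\tau=1/(\beta_m-\alpha)$ and $$\beta(t)=\alpha+\frac{2t/\tau^2}{1+t^2/\tau^2}.$$ Let $S_0>0$, $I_0>0$ and let $(S(t),I(t),R(t))$ be the solution of $$\dot S=-\frac{\beta(t)SI}{S+I},\qquad \dot I=\frac{\beta(t)SI}{S+I}-\alpha I,\qquad \dot R=\alpha I$$ with $S(0)=S_0$, $I(0)=I_0$. Writing $k=\sqrt{\frac{I_0}{S_0+I_0}}$, for $t\ge 0$, $$S(t)=S_0\left(\frac{S_0+I_0}{S_0+I_0(1+t^2/\tau^2)}\right)\exp\left[\alpha\,\frac{S_0}{S_0+I_0}\,\frac{\arctan(k\,t/\tau)}{k/\tau}\right]e^{-\alpha t},$$ $$I(t)=I_0\left(1+\frac{t^2}{\tau^2}\right)\left(\frac{S_0+I_0}{S_0+I_0(1+t^2/\tau^2)}\right)\exp\left[\alpha\,\frac{S_0}{S_0+I_0}\,\frac{\arctan(k\,t/\tau)}{k/\tau}\right]e^{-\alpha t}.$$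
   Context: Modified SIR epidemiological model with constant recovery rate $\alpha$ and time-dependent transmission rate $\beta(t)$, here having its maximum value $\beta_m$ at $t=\tau$. *)

theory Defs
  imports "HOL-Analysis.Analysis"
begin

end

theory Submission
  imports Defs
begin

lemma alg1:
  fixes \<alpha> d G N P S0 I0 :: real
  assumes "G > 0" "P = S0 + I0 * G" "P > 0" "N > 0"
  shows "0 - (I0 * d) / P + \<alpha> * (S0 / N) * inverse (P / N) + - \<alpha> = -((\<alpha> + d / G) * (I0 * G) / P)"
proof -
  have "\<alpha> * (S0 / N) * inverse (P / N) = \<alpha> * S0 / P" using assms by (simp add: field_simps)
  also have "... = \<alpha> - \<alpha> * I0 * G / P"
  proof -
    have "\<alpha> * S0 = \<alpha> * P - \<alpha> * I0 * G" using assms(2) by (simp add: algebra_simps)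
    then show ?thesis using assms(3) by (simp add: diff_divide_distrib)
  qed
  finally have e: "\<alpha> * (S0 / N) * inverse (P / N) = \<alpha> - \<alpha> * I0 * G / P" .
  have "G \<noteq> 0" "P \<noteq> 0" using assms by auto
  then show ?thesis unfolding e by (simp add: field_simps)
qed

lemma alg2:
  fixes a b d G S I :: real
  assumes "S + I \<noteq> 0"
  shows "(b * S * I / (S + I) - a * I) * (S * G) - I * (- (b * S * I / (S + I)) * G + d * S)
     = S * I * ((b - a) * G - d)"
proof -
  define Q where "Q = b * S * I / (S + I)"
  have "Q * S + Q * I = Q * (S + I)" by (simp add: algebra_simps)
  also have "... = b * S * I" unfolding Q_def using assms by simp
  finally have hQ: "Q * S + Q * I = b * S * I" .
  have "(Q - a * I) * (S * G) - I * (- Q * G + d * S) = G * (Q * S + Q * I) - a * I * S * G - I * d * S"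
    by (simp add: algebra_simps)
  also have "... = S * I * ((b - a) * G - d)" unfolding hQ by (simp add: algebra_simps)
  finally show ?thesis unfolding Q_def by simp
qed

lemma alg3:
  fixes S S0 I0 G :: real
  assumes "S > 0" "S0 > 0" "S0 + I0 * G > 0"
  shows "S * (I0 * G * S / S0) / (S + I0 * G * S / S0) = S * (I0 * G) / (S0 + I0 * G)"
proof -
  define P where "P = S0 + I0 * G"
  have Pnz: "P \<noteq> 0" using assms unfolding P_def by auto
  have e: "S + I0 * G * S / S0 = S * P / S0" using assms unfolding P_def by (simp add: field_simps)
  have nz: "S \<noteq> 0" "S0 \<noteq> 0" using assms by auto
  have calc: "S * (I0 * G * S / S0) = (S * (I0 * G) / P) * (S * P / S0)"
    using nz Pnz by (simp add: field_simps)
  have "S * P / S0 \<noteq> 0" using nz Pnz by simp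
  then show ?thesis unfolding e P_def[symmetric] calc by (rule nonzero_mult_div_cancel_right)
qed

lemma E_deriv_aux:
  fixes \<alpha> \<tau> S0 I0 k s :: real
  assumes "\<tau> > 0" "S0 > 0" "I0 > 0" "k > 0" "k^2 = I0/(S0+I0)"
  shows "((\<lambda>s. ln (S0+I0) - ln (S0 + I0 * (1 + s^2 / \<tau>^2)) + \<alpha> * (S0 / (S0+I0)) * (arctan (k * s / \<tau>) / (k / \<tau>)) + (- \<alpha> * s))
     has_real_derivative (-((\<alpha> + (2 * s / \<tau>^2) / (1 + s^2 / \<tau>^2)) * (I0 * (1 + s^2 / \<tau>^2)) / (S0 + I0 * (1 + s^2 / \<tau>^2))))) (at s within X)"
proof -
  have gp: "S0 + I0 * (1 + s^2 / \<tau>^2) > 0" using assms by (simp add: add_pos_nonneg)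
  have g1: "1 + s^2 / \<tau>^2 > 0" using assms by (simp add: add_pos_nonneg)
  have kk: "1 + (k * s / \<tau>)^2 = (S0 + I0 * (1 + s^2 / \<tau>^2)) / (S0+I0)"
  proof -
    have "(k * s / \<tau>)^2 = k^2 * s^2 / \<tau>^2" by (simp add: power_divide power_mult_distrib)
    also have "... = I0/(S0+I0) * s^2 / \<tau>^2" using assms by simp
    finally have "1 + (k * s / \<tau>)^2 = 1 + I0/(S0+I0) * s^2 / \<tau>^2" by simp
    moreover have "1 + I0/(S0+I0) * s^2 / \<tau>^2 = (S0 + I0 * (1 + s^2 / \<tau>^2)) / (S0+I0)"
    proof -
      have t2: "\<tau>^2 > 0" using assms by simp
      have "I0 * \<tau>^2 > 0" "S0 * \<tau>^2 > 0" using assms t2 by auto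
      then have "I0 * \<tau>^2 + S0 * \<tau>^2 \<noteq> 0" by linarith
      moreover have "S0+I0 \<noteq> 0" "\<tau>^2 \<noteq> 0" using assms by auto
      ultimately show ?thesis by (simp add: field_simps)
    qed
    ultimately show ?thesis by simp
  qed
  have d1: "((\<lambda>s. ln (S0 + I0 * (1 + s^2 / \<tau>^2))) has_real_derivative (I0 * (2 * s / \<tau>^2)) / (S0 + I0 * (1 + s^2 / \<tau>^2))) (at s within X)"
    using gp assms by (auto intro!: derivative_eq_intros simp: field_simps power2_eq_square)
  have "((\<lambda>s. arctan (k * s / \<tau>)) has_real_derivative inverse (1 + (k * s / \<tau>)^2) * (k / \<tau>)) (at s within X)"
    using assms by (rule_tac DERIV_chain2[OF DERIV_arctan]) (auto intro!: derivative_eq_intros)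
  from DERIV_cdivide[OF this, of "k/\<tau>"]
  have d2: "((\<lambda>s. arctan (k * s / \<tau>) / (k / \<tau>)) has_real_derivative inverse (1 + (k * s / \<tau>)^2)) (at s within X)"
    using assms by simp
  have d3: "((\<lambda>s. - \<alpha> * s) has_real_derivative - \<alpha>) (at s within X)"
    by (auto intro!: derivative_eq_intros)
  have "((\<lambda>s. ln (S0+I0) - ln (S0 + I0 * (1 + s^2 / \<tau>^2)) + \<alpha> * (S0 / (S0+I0)) * (arctan (k * s / \<tau>) / (k / \<tau>)) + (- \<alpha> * s))
     has_real_derivative (0 - (I0 * (2 * s / \<tau>^2)) / (S0 + I0 * (1 + s^2 / \<tau>^2)) + \<alpha> * (S0 / (S0+I0)) * inverse (1 + (k * s / \<tau>)^2) + - \<alpha>)) (at s within X)"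
    by (intro DERIV_add DERIV_diff DERIV_cmult DERIV_const d1 d2 d3)
  moreover have "(0 - (I0 * (2 * s / \<tau>^2)) / (S0 + I0 * (1 + s^2 / \<tau>^2)) + \<alpha> * (S0 / (S0+I0)) * inverse (1 + (k * s / \<tau>)^2) + - \<alpha>)
     = (-((\<alpha> + (2 * s / \<tau>^2) / (1 + s^2 / \<tau>^2)) * (I0 * (1 + s^2 / \<tau>^2)) / (S0 + I0 * (1 + s^2 / \<tau>^2))))"
    unfolding kk using assms gp g1 by (intro alg1) auto
  ultimately show ?thesis by simp
qed

theorem mainTheorem6:
  fixes \<alpha> \<beta>m \<tau> S0 I0 :: real
    and \<beta> S I R :: "real \<Rightarrow> real"
  assumes h_alpha: "\<alpha> > 0"
    and h_betam: "\<beta>m > \<alpha>"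
    and h_tau: "\<tau> = 1 / (\<beta>m - \<alpha>)"
    and h_beta: "\<And>t. \<beta> t = \<alpha> + (2 * t / \<tau>^2) / (1 + t^2 / \<tau>^2)"
    and h_S0: "S0 > 0" and h_I0: "I0 > 0"
    and h_init: "S 0 = S0" "I 0 = I0"
    and h_S: "\<And>t. t \<ge> 0 \<Longrightarrow>
       (S has_real_derivative (- (\<beta> t * S t * I t / (S t + I t)))) (at t within {0..})"
    and h_I: "\<And>t. t \<ge> 0 \<Longrightarrow>
       (I has_real_derivative (\<beta> t * S t * I t / (S t + I t) - \<alpha> * I t)) (at t within {0..})"
    and h_R: "\<And>t. t \<ge> 0 \<Longrightarrow>
       (R has_real_derivative (\<alpha> * I t)) (at t within {0..})"
  shows "\<forall>t\<ge>0.
    (let k = sqrt (I0 / (S0 + I0));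
         F = ((S0 + I0) / (S0 + I0 * (1 + t^2 / \<tau>^2)))
             * exp (\<alpha> * (S0 / (S0 + I0)) * (arctan (k * t / \<tau>) / (k / \<tau>)))
             * exp (- \<alpha> * t)
     in S t = S0 * F \<and> I t = I0 * (1 + t^2 / \<tau>^2) * F)"
proof -
  have tau: "\<tau> > 0" using h_tau h_betam by simp
  define k where "k = sqrt (I0 / (S0 + I0))"
  have kpos: "k > 0" unfolding k_def using h_S0 h_I0 by simp
  have k2: "k^2 = I0 / (S0 + I0)" unfolding k_def using h_S0 h_I0 by simp
  define g where "g s = 1 + s^2 / \<tau>^2" for s
  define E where "E s = ln (S0+I0) - ln (S0 + I0 * (1 + s^2 / \<tau>^2)) + \<alpha> * (S0 / (S0+I0)) * (arctan (k * s / \<tau>) / (k / \<tau>)) + (- \<alpha> * s)" for s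
  have gpos: "g s > 0" for s unfolding g_def using tau by (simp add: add_pos_nonneg)
  have g0: "g 0 = 1" unfolding g_def by simp
  have gd: "(g has_real_derivative 2 * s / \<tau>^2) (at s within X)" for s X
    unfolding g_def[abs_def] using tau by (auto intro!: derivative_eq_intros simp: power2_eq_square)
  have Ed: "(E has_real_derivative -(\<beta> s * (I0 * g s) / (S0 + I0 * g s))) (at s within X)" for s X
    unfolding E_def[abs_def] g_def h_beta using E_deriv_aux[OF tau h_S0 h_I0 kpos k2] by simp
  have E0: "E 0 = 0" unfolding E_def by simp
  have key: "S s = S0 * exp (E s) \<and> I s = I0 * g s * exp (E s)"
    if C: "convex C" "C \<subseteq> {0..}" "0 \<in> C" and pos: "\<And>x. x \<in> C \<Longrightarrow> S x > 0 \<and> I x > 0"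
      and s: "s \<in> C" for C s
  proof -
    have dS: "(S has_real_derivative (- (\<beta> x * S x * I x / (S x + I x)))) (at x within C)" if "x \<in> C" for x
      using h_S[of x] C that by (auto intro: DERIV_subset)
    have dI: "(I has_real_derivative (\<beta> x * S x * I x / (S x + I x) - \<alpha> * I x)) (at x within C)" if "x \<in> C" for x
      using h_I[of x] C that by (auto intro: DERIV_subset)
    have "\<exists>c. \<forall>x\<in>C. I x / (S x * g x) = c"
    proof (rule has_field_derivative_zero_constant[OF C(1)])
      fix x assume x: "x \<in> C"
      have Sx: "S x > 0" and Ix: "I x > 0" using pos[OF x] by auto
      have nz: "S x * g x \<noteq> 0" using Sx gpos[of x] by simp
      note d = DERIV_divide[OF dI[OF x] DERIV_mult[OF dS[OF x] gd], OF nz]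
      have bx: "\<beta> x = \<alpha> + (2 * x / \<tau>^2) / g x" unfolding h_beta g_def ..
      have "(\<beta> x * S x * I x / (S x + I x) - \<alpha> * I x) * (S x * g x) -
            I x * (- (\<beta> x * S x * I x / (S x + I x)) * g x + 2 * x / \<tau>\<^sup>2 * S x) = 0"
      proof -
        have "S x + I x > 0" using Sx Ix by simp
        then have "(\<beta> x * S x * I x / (S x + I x) - \<alpha> * I x) * (S x * g x) -
            I x * (- (\<beta> x * S x * I x / (S x + I x)) * g x + 2 * x / \<tau>\<^sup>2 * S x)
            = S x * I x * ((\<beta> x - \<alpha>) * g x - 2 * x / \<tau>\<^sup>2)"
          using alg2[of "S x" "I x" "\<beta> x" "\<alpha>" "g x" "2 * x / \<tau>\<^sup>2"] by (simp add: mult.commute)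
        also have "(\<beta> x - \<alpha>) * g x - 2 * x / \<tau>\<^sup>2 = 0" unfolding bx using gpos[of x] by simp
        finally show ?thesis by simp
      qed
      with d show "((\<lambda>x. I x / (S x * g x)) has_real_derivative 0) (at x within C)" by simp
    qed
    then obtain c where c: "\<And>x. x \<in> C \<Longrightarrow> I x / (S x * g x) = c" by blast
    have "c = I0 / S0" using c[OF C(3)] h_init g0 by simp
    then have Ieq: "I x = I0 * g x * S x / S0" if "x \<in> C" for x
      using c[OF that] pos[OF that] gpos[of x] h_S0 by (simp add: field_simps)
    have "\<exists>c. \<forall>x\<in>C. S x * exp (- E x) = c"
    proof (rule has_field_derivative_zero_constant[OF C(1)])
      fix x assume x: "x \<in> C"
      have Sx: "S x > 0" using pos[OF x] by auto
      note d = DERIV_mult[OF dS[OF x] DERIV_chain2[OF DERIV_exp DERIV_minus[OF Ed]]]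
      have "S x * I x / (S x + I x) = S x * (I0 * g x) / (S0 + I0 * g x)"
        unfolding Ieq[OF x] using Sx h_S0 h_I0 gpos[of x]
        by (intro alg3) (auto intro!: add_pos_pos)
      then have hh: "\<beta> x * S x * I x / (S x + I x) = \<beta> x * (S x * (I0 * g x) / (S0 + I0 * g x))"
        by (metis (no_types, lifting) times_divide_eq_right mult.assoc)
      have "- (\<beta> x * S x * I x / (S x + I x)) * exp (- E x) +
          exp (- E x) * - (- (\<beta> x * (I0 * g x) / (S0 + I0 * g x))) * S x = 0"
        unfolding hh by (simp add: algebra_simps)
      with d show "((\<lambda>x. S x * exp (- E x)) has_real_derivative 0) (at x within C)" by simp
    qed
    then obtain c2 where c2: "\<And>x. x \<in> C \<Longrightarrow> S x * exp (- E x) = c2" by blast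
    have "c2 = S0" using c2[OF C(3)] h_init E0 by simp
    then have Seq: "S s = S0 * exp (E s)" using c2[OF s] by (simp add: exp_minus field_simps)
    show ?thesis using Seq Ieq[OF s] h_S0 by simp
  qed
  define A where "A = {s. 0 \<le> s \<and> (S s \<le> 0 \<or> I s \<le> 0)}"
  have contS: "continuous_on {0..} S" by (rule DERIV_continuous_on) (use h_S in auto)
  have contI: "continuous_on {0..} I" by (rule DERIV_continuous_on) (use h_I in auto)
  have contE: "continuous_on UNIV E" by (rule DERIV_continuous_on) (rule Ed)
  have contg: "continuous_on UNIV g" by (rule DERIV_continuous_on) (rule gd)
  have Aempty: "A = {}"
  proof (rule ccontr)
    assume ne: "A \<noteq> {}"
    have "A = ({0..} \<inter> S -` {..0}) \<union> ({0..} \<inter> I -` {..0})" unfolding A_def by auto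
    moreover have "closed ({0..} \<inter> S -` {..0})" by (rule continuous_closed_preimage[OF contS]) auto
    moreover have "closed ({0..} \<inter> I -` {..0})" by (rule continuous_closed_preimage[OF contI]) auto
    ultimately have clA: "closed A" by auto
    have bdd: "bdd_below A" unfolding A_def by (auto intro: bdd_belowI[of _ 0])
    define T where "T = Inf A"
    have TA: "T \<in> A" unfolding T_def using closed_contains_Inf[OF ne bdd clA] .
    have "T \<noteq> 0" using TA h_init h_S0 h_I0 unfolding A_def by auto
    then have Tpos: "T > 0" using TA unfolding A_def by auto
    have posT: "S x > 0 \<and> I x > 0" if "x \<in> {0..<T}" for x
    proof (rule ccontr)
      assume "\<not> (S x > 0 \<and> I x > 0)"
      then have "x \<in> A" using that unfolding A_def by auto
      then have "T \<le> x" unfolding T_def by (rule cInf_lower[OF _ bdd])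
      then show False using that by simp
    qed
    have eqT: "S x = S0 * exp (E x) \<and> I x = I0 * g x * exp (E x)" if "x \<in> {0..<T}" for x
      by (rule key[of "{0..<T}"]) (use Tpos posT that in auto)
    have clT: "closure {0..<T} = {0..T}" using Tpos by simp
    have c1: "continuous_on (closure {0..<T}) (\<lambda>x. S x - S0 * exp (E x))" unfolding clT
      by (intro continuous_intros continuous_on_subset[OF contS] continuous_on_subset[OF contE]) auto
    have c2: "continuous_on (closure {0..<T}) (\<lambda>x. I x - I0 * g x * exp (E x))" unfolding clT
      by (intro continuous_intros continuous_on_subset[OF contI] continuous_on_subset[OF contE]
          continuous_on_subset[OF contg]) auto
    have "S T - S0 * exp (E T) = 0"
      by (rule continuous_constant_on_closure[OF c1]) (use eqT clT Tpos in auto)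
    moreover have "I T - I0 * g T * exp (E T) = 0"
      by (rule continuous_constant_on_closure[OF c2]) (use eqT clT Tpos in auto)
    ultimately have "S T > 0" "I T > 0" using h_S0 h_I0 gpos[of T] by auto
    then show False using TA unfolding A_def by auto
  qed
  show ?thesis
  proof (intro allI impI)
    fix t :: real assume t: "t \<ge> 0"
    have pos: "S x > 0 \<and> I x > 0" if "x \<in> {0..}" for x
      using Aempty that unfolding A_def by auto
    have eq: "S t = S0 * exp (E t) \<and> I t = I0 * g t * exp (E t)"
      by (rule key[of "{0..}"]) (use pos t in auto)
    have "0 < I0 * (1 + t^2 / \<tau>^2)" using gpos[of t] h_I0 unfolding g_def by simp
    then have gp: "S0 + I0 * (1 + t^2 / \<tau>^2) > 0" using h_S0 by linarith
    have "exp (E t) = ((S0 + I0) / (S0 + I0 * (1 + t^2 / \<tau>^2)))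
             * exp (\<alpha> * (S0 / (S0 + I0)) * (arctan (k * t / \<tau>) / (k / \<tau>)))
             * exp (- \<alpha> * t)"
    proof -
      have "exp (E t) = exp (ln (S0+I0) - ln (S0 + I0 * (1 + t^2 / \<tau>^2)))
          * exp (\<alpha> * (S0 / (S0+I0)) * (arctan (k * t / \<tau>) / (k / \<tau>))) * exp (- \<alpha> * t)"
        unfolding E_def by (simp only: exp_add)
      also have "exp (ln (S0+I0) - ln (S0 + I0 * (1 + t^2 / \<tau>^2))) = (S0 + I0) / (S0 + I0 * (1 + t^2 / \<tau>^2))"
        using gp h_S0 h_I0 by (simp add: exp_diff)
      finally show ?thesis .
    qed
    then show "let k = sqrt (I0 / (S0 + I0));
         F = ((S0 + I0) / (S0 + I0 * (1 + t^2 / \<tau>^2)))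
             * exp (\<alpha> * (S0 / (S0 + I0)) * (arctan (k * t / \<tau>) / (k / \<tau>)))
             * exp (- \<alpha> * t)
     in S t = S0 * F \<and> I t = I0 * (1 + t^2 / \<tau>^2) * F"
      using eq unfolding Let_def k_def[symmetric] g_def by simp
  qed
qed

end
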